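(* Let $u=u_1\cdots u_r$ be an allowed word of $\Sigma_A$ with $r\ge2$ and let $\mathcal G=\{u\}$. Then $$\det(\mathbf I-z\,B_{\mathcal G}\circ P_{r-1})=f_u(z),\qquad\text{where } f_u(z)=\tilde\tau_u(z)\det(\mathbf I-zP)+z^{r-1}\delta_u\big(\operatorname{adj}(\mathbf I-zP)\big)_{u_ru_1}.$$
   Context: Let $\Sigma=\{1,\dots,N\}$, $A$ an irreducible $N\times N$ $0$–$1$ matrix, $\Sigma_A=\{x\in\Sigma^{\mathbb N}:A_{x_nx_{n+1}}=1\ \forall n\}$; $\mathcal L_n$ is the set of allowed words of length $n$ (occurring in some element of $\Sigma_A$). $P$ is a row-stochastic matrix with $P_{ij}>0$ iff $A_{ij}=1$. For $X=x_1\cdots x_n,Y=y_1\cdots y_n\in\mathcal L_n$ with $x_2\cdots x_n=y_1\cdots y_{n-1}$ (vacuous if $n=1$), $X*Y=x_1\cdots x_ny_n$. $P_n$ is indexed by $\mathcal L_n$ with $(P_n)_{XY}=P_{x_ny_n}$ if $X*Y$ is defined and lies in $\mathcal L_{n+1}$, and $0$ otherwise. $B_{\{u\}}$ is the $0$–$1$ matrix indexed by $\mathcal L_{r-1}$ with entry $1$ at $(X,Y)$ iff $X*Y$ is defined, lies in $\mathcal L_r$, and $X*Y\ne u$ (for $r-1\ge1$; when $r=2$ this is indexed by $\Sigma=\mathcal L_1$). $\circ$ is the Hadamard product, $\operatorname{adj}$ the adjugate. $\delta_u=P_{u_1u_2}\cdots P_{u_{r-1}u_r}$; for $0\le s\le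 r-1$, $c_{s,u,u}=1$ if $u_{s+1}\cdots u_r=u_1\cdots u_{r-s}$ and $0$ otherwise, $\delta_{s,u,u}=\prod_{j=r-s}^{r-1}P_{u_ju_{j+1}}$ (empty product $=1$), $\tau_u(z)=\sum_{s=0}^{r-1}c_{s,u,u}\delta_{s,u,u}z^s$, and $\tilde\tau_u(z)=\tau_u(z)-z^{r-1}c_{r-1,u,u}\delta_u$. *)

theory Defs
  imports "HOL-Analysis.Analysis"
begin

text \<open>Alphabet \<Sigma> = {1..N}; words are lists over nat; A is a 0-1 matrix given as a
function nat => nat => nat, P a real matrix nat => nat => real (only entries on
\<Sigma> matter).\<close>

definition alphabet :: "nat \<Rightarrow> nat set" where
  "alphabet N = {1..N}"

definition zero_one_matrix :: "nat \<Rightarrow> (nat \<Rightarrow> nat \<Rightarrow> nat) \<Rightarrow> bool" where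
  "zero_one_matrix N A \<longleftrightarrow> (\<forall>i\<in>alphabet N. \<forall>j\<in>alphabet N. A i j \<in> {0,1})"

text \<open>Irreducible: for all i, j there is n \<ge> 1 with (A^n)_{ij} > 0, i.e. a path
of positive length from i to j along allowed transitions.\<close>
definition irreducible_01 :: "nat \<Rightarrow> (nat \<Rightarrow> nat \<Rightarrow> nat) \<Rightarrow> bool" where
  "irreducible_01 N A \<longleftrightarrow>
     (\<forall>i\<in>alphabet N. \<forall>j\<in>alphabet N. \<exists>w::nat list.
        length w \<ge> 2 \<and> hd w = i \<and> last w = j \<and> set w \<subseteq> alphabet N \<and>
        (\<forall>k. Suc k < length w \<longrightarrow> A (w ! k) (w ! Suc k) = 1))"

definition shift_space :: "nat \<Rightarrow> (nat \<Rightarrow> nat \<Rightarrow> nat) \<Rightarrow> (nat \<Rightarrow> nat) set" where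
  "shift_space N A = {x. (\<forall>n. x n \<in> alphabet N) \<and> (\<forall>n. A (x n) (x (Suc n)) = 1)}"

definition allowed_words :: "nat \<Rightarrow> (nat \<Rightarrow> nat \<Rightarrow> nat) \<Rightarrow> nat \<Rightarrow> nat list set" where
  "allowed_words N A n = {w. \<exists>x\<in>shift_space N A. \<exists>k. w = map x [k..<k+n]}"

definition row_stochastic_compatible ::
  "nat \<Rightarrow> (nat \<Rightarrow> nat \<Rightarrow> nat) \<Rightarrow> (nat \<Rightarrow> nat \<Rightarrow> real) \<Rightarrow> bool" where
  "row_stochastic_compatible N A P \<longleftrightarrow>
     (\<forall>i\<in>alphabet N. \<forall>j\<in>alphabet N. P i j \<ge> 0 \<and> (P i j > 0 \<longleftrightarrow> A i j = 1)) \<and>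
     (\<forall>i\<in>alphabet N. (\<Sum>j\<in>alphabet N. P i j) = 1)"

definition star_defined :: "nat list \<Rightarrow> nat list \<Rightarrow> bool" where
  "star_defined X Y \<longleftrightarrow> length X = length Y \<and> X \<noteq> [] \<and> tl X = butlast Y"

definition star :: "nat list \<Rightarrow> nat list \<Rightarrow> nat list" where
  "star X Y = X @ [last Y]"

definition higher_block_P ::
  "nat \<Rightarrow> (nat \<Rightarrow> nat \<Rightarrow> nat) \<Rightarrow> (nat \<Rightarrow> nat \<Rightarrow> real) \<Rightarrow> nat \<Rightarrow> nat list \<Rightarrow> nat list \<Rightarrow> real" where
  "higher_block_P N A P n X Y =
     (if star_defined X Y \<and> star X Y \<in> allowed_words N A (Suc n) then P (last X) (last Y) else 0)"

definition B_single ::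
  "nat \<Rightarrow> (nat \<Rightarrow> nat \<Rightarrow> nat) \<Rightarrow> nat list \<Rightarrow> nat list \<Rightarrow> nat list \<Rightarrow> real" where
  "B_single N A u X Y =
     (if star_defined X Y \<and> star X Y \<in> allowed_words N A (length u) \<and> star X Y \<noteq> u then 1 else 0)"

definition hadamard :: "('i \<Rightarrow> 'i \<Rightarrow> 'a::times) \<Rightarrow> ('i \<Rightarrow> 'i \<Rightarrow> 'a) \<Rightarrow> 'i \<Rightarrow> 'i \<Rightarrow> 'a" where
  "hadamard M M' i j = M i j * M' i j"

definition det_on :: "'i set \<Rightarrow> ('i \<Rightarrow> 'i \<Rightarrow> 'a::comm_ring_1) \<Rightarrow> 'a" where
  "det_on I M = (\<Sum>p\<in>{p. p permutes I}. of_int (sign p) * (\<Prod>i\<in>I. M i (p i)))"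

text \<open>Adjugate: adj(M)_{ij} is the (j,i) cofactor, i.e. the determinant of M with
row j replaced by the i-th unit row vector.\<close>
definition adj_on :: "'i set \<Rightarrow> ('i \<Rightarrow> 'i \<Rightarrow> 'a::comm_ring_1) \<Rightarrow> 'i \<Rightarrow> 'i \<Rightarrow> 'a" where
  "adj_on I M i j = det_on I (\<lambda>a b. if a = j then (if b = i then 1 else 0) else M a b)"

definition id_minus :: "'a::comm_ring_1 \<Rightarrow> ('i \<Rightarrow> 'i \<Rightarrow> 'a) \<Rightarrow> 'i \<Rightarrow> 'i \<Rightarrow> 'a" where
  "id_minus z M i j = (if i = j then 1 else 0) - z * M i j"

text \<open>Quantities attached to u = u_1..u_r (list index k corresponds to u_{k+1}).\<close>
definition delta_u :: "(nat \<Rightarrow> nat \<Rightarrow> real) \<Rightarrow> nat list \<Rightarrow> real" where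
  "delta_u P u = (\<Prod>j\<in>{1..length u - 1}. P (u ! (j - 1)) (u ! j))"

definition c_uu :: "nat \<Rightarrow> nat list \<Rightarrow> real" where
  "c_uu s u = (if drop s u = take (length u - s) u then 1 else 0)"

definition delta_s_uu :: "(nat \<Rightarrow> nat \<Rightarrow> real) \<Rightarrow> nat \<Rightarrow> nat list \<Rightarrow> real" where
  "delta_s_uu P s u = (\<Prod>j\<in>{length u - s..length u - 1}. P (u ! (j - 1)) (u ! j))"

definition tau_u :: "(nat \<Rightarrow> nat \<Rightarrow> real) \<Rightarrow> nat list \<Rightarrow> complex \<Rightarrow> complex" where
  "tau_u P u z = (\<Sum>s\<in>{0..length u - 1}. of_real (c_uu s u * delta_s_uu P s u) * z ^ s)"

definition tau_tilde_u :: "(nat \<Rightarrow> nat \<Rightarrow> real) \<Rightarrow> nat list \<Rightarrow> complex \<Rightarrow> complex" where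
  "tau_tilde_u P u z = tau_u P u z
     - z ^ (length u - 1) * of_real (c_uu (length u - 1) u * delta_u P u)"

definition f_u :: "nat \<Rightarrow> (nat \<Rightarrow> nat \<Rightarrow> real) \<Rightarrow> nat list \<Rightarrow> complex \<Rightarrow> complex" where
  "f_u N P u z =
     tau_tilde_u P u z * det_on (alphabet N) (id_minus z (\<lambda>i j. of_real (P i j)))
     + z ^ (length u - 1) * of_real (delta_u P u)
       * adj_on (alphabet N) (id_minus z (\<lambda>i j. of_real (P i j))) (last u) (hd u)"

end

theory Submission
  imports Defs "Jordan_Normal_Form.Determinant" "HOL-Computational_Algebra.Polynomial"
begin


lemma map_permutation_apply:
  assumes "inj_on f A" "x \<in> A"
  shows "map_permutation A f p (f x) = f (p x)"
  using assms by (simp add: map_permutation_def restrict_id_def)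

lemma det_on_reindex:
  assumes f: "bij_betw f A B" and fin: "finite A"
  shows "det_on B M = det_on A (\<lambda>i j. M (f i) (f j))"
proof -
  let ?g = "map_permutation A f"
  let ?h = "map_permutation B (inv_into A f)"
  have inj: "inj_on f A" using f by (simp add: bij_betw_def)
  have fi: "bij_betw (inv_into A f) B A" using f by (simp add: bij_betw_inv_into)
  have bij: "bij_betw ?g {p. p permutes A} {q. q permutes B}"
  proof (rule bij_betw_byWitness[where f' = ?h])
    show "\<forall>p\<in>{p. p permutes A}. ?h (?g p) = p"
    proof
      fix p assume p: "p \<in> {p. p permutes A}"
      have "?h (?g p) = map_permutation A (inv_into A f \<circ> f) p"
        by (rule map_permutation_compose[OF f]) (use fi in \<open>simp add: bij_betw_def\<close>)
      also have "\<dots> = map_permutation A id p"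
        by (rule map_permutation_cong) (use p inj in \<open>auto simp: inj_on_def\<close>)
      also have "\<dots> = p" using p by simp
      finally show "?h (?g p) = p" .
    qed
    show "\<forall>q\<in>{q. q permutes B}. ?g (?h q) = q"
    proof
      fix q assume q: "q \<in> {q. q permutes B}"
      have "?g (?h q) = map_permutation B (f \<circ> inv_into A f) q"
        by (rule map_permutation_compose[OF fi]) (use inj in simp)
      also have "\<dots> = map_permutation B id q"
        by (rule map_permutation_cong) (use q fi f in \<open>auto simp: bij_betw_def f_inv_into_f inj_on_def\<close>)
      also have "\<dots> = q" using q by simp
      finally show "?g (?h q) = q" .
    qed
    show "?g ` {p. p permutes A} \<subseteq> {q. q permutes B}"
      using map_permutation_permutes[OF f] by auto
    show "?h ` {q. q permutes B} \<subseteq> {p. p permutes A}"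
      using map_permutation_permutes[OF fi] by auto
  qed
  have "det_on B M = (\<Sum>p\<in>{p. p permutes A}. of_int (sign (?g p)) * (\<Prod>b\<in>B. M b (?g p b)))"
    unfolding det_on_def by (rule sum.reindex_bij_betw[OF bij, symmetric])
  also have "\<dots> = det_on A (\<lambda>i j. M (f i) (f j))"
    unfolding det_on_def
  proof (rule sum.cong[OF refl])
    fix p assume p: "p \<in> {p. p permutes A}"
    have s: "sign (?g p) = sign p" using sign_map_permutation[OF inj _ fin] p by simp
    have "(\<Prod>b\<in>B. M b (?g p b)) = (\<Prod>i\<in>A. M (f i) (?g p (f i)))"
      by (rule prod.reindex_bij_betw[OF f, symmetric])
    also have "\<dots> = (\<Prod>i\<in>A. M (f i) (f (p i)))"
      by (rule prod.cong[OF refl]) (simp add: map_permutation_apply[OF inj])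
    finally show "of_int (sign (?g p)) * (\<Prod>b\<in>B. M b (?g p b)) = of_int (sign p) * (\<Prod>i\<in>A. M (f i) (f (p i)))"
      using s by simp
  qed
  finally show ?thesis .
qed

lemma det_on_mat: "det_on {0..<n} M = det (mat n n (\<lambda>(i,j). M i j))"
  unfolding det_on_def det_def by (auto intro!: sum.cong prod.cong)

lemma det_on_jnf:
  assumes "finite I"
  obtains h where "bij_betw h {0..<card I} I"
    "\<And>M. det_on I M = det (mat (card I) (card I) (\<lambda>(i,j). M (h i) (h j)))"
proof -
  obtain h where h: "bij_betw h {0..<card I} I"
    using ex_bij_betw_nat_finite[OF assms] by blast
  show ?thesis
    by (rule that[OF h]) (simp add: det_on_reindex[OF h] det_on_mat)
qed




lemma jnf_sylvester:
  fixes D :: "'a::idom mat"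
  assumes D: "D \<in> carrier_mat m k" and E: "E \<in> carrier_mat k m"
  shows "det (1\<^sub>m m - D * E) = det (1\<^sub>m k - E * D)"
proof -
  let ?T = "four_block_mat (1\<^sub>m m) D E (1\<^sub>m k)"
  have T: "?T \<in> carrier_mat (m+k) (m+k)" using D E by auto
  have L1: "four_block_mat (1\<^sub>m m) (0\<^sub>m m k) (-E) (1\<^sub>m k) \<in> carrier_mat (m+k) (m+k)" using E by auto
  have L2: "four_block_mat (1\<^sub>m m) (-D) (0\<^sub>m k m) (1\<^sub>m k) \<in> carrier_mat (m+k) (m+k)" using D by auto
  have dL1: "det (four_block_mat (1\<^sub>m m) (0\<^sub>m m k) (-E) (1\<^sub>m k)) = 1"
    by (subst det_four_block_mat_upper_right_zero[of _ m _ k]) (use E in auto)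
  have dL2: "det (four_block_mat (1\<^sub>m m) (-D) (0\<^sub>m k m) (1\<^sub>m k)) = 1"
    by (subst det_four_block_mat_lower_left_zero[of _ m _ k]) (use D in auto)
  have P1: "?T * four_block_mat (1\<^sub>m m) (0\<^sub>m m k) (-E) (1\<^sub>m k)
      = four_block_mat (1\<^sub>m m - D * E) D (0\<^sub>m k m) (1\<^sub>m k)"
    using D E by (subst mult_four_block_mat[of _ m m _ k _ k]) (auto simp: mult_minus_distrib_mat)
  have P2: "?T * four_block_mat (1\<^sub>m m) (-D) (0\<^sub>m k m) (1\<^sub>m k)
      = four_block_mat (1\<^sub>m m) (0\<^sub>m m k) E (1\<^sub>m k - E * D)"
    using D E by (subst mult_four_block_mat[of _ m m _ k _ k]) (auto simp: mult_minus_distrib_mat)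
  have "det ?T = det (1\<^sub>m m - D * E)"
  proof -
    have "det ?T = det ?T * det (four_block_mat (1\<^sub>m m) (0\<^sub>m m k) (-E) (1\<^sub>m k))" using dL1 by simp
    also have "\<dots> = det (four_block_mat (1\<^sub>m m - D * E) D (0\<^sub>m k m) (1\<^sub>m k))"
      using det_mult[OF T L1] P1 by simp
    also have "\<dots> = det (1\<^sub>m m - D * E)"
      by (subst det_four_block_mat_lower_left_zero[of _ m _ k]) (use D E in auto)
    finally show ?thesis .
  qed
  moreover have "det ?T = det (1\<^sub>m k - E * D)"
  proof -
    have "det ?T = det ?T * det (four_block_mat (1\<^sub>m m) (-D) (0\<^sub>m k m) (1\<^sub>m k))" using dL2 by simp
    also have "\<dots> = det (four_block_mat (1\<^sub>m m) (0\<^sub>m m k) E (1\<^sub>m k - E * D))"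
      using det_mult[OF T L2] P2 by simp
    also have "\<dots> = det (1\<^sub>m k - E * D)"
      by (subst det_four_block_mat_upper_right_zero[of _ m _ k]) (use D E in auto)
    finally show ?thesis .
  qed
  ultimately show ?thesis by simp
qed




lemma det_on_jnf_eq:
  assumes h: "bij_betw h {0..<card I} I"
  shows "det_on I M = det (mat (card I) (card I) (\<lambda>(i,j). M (h i) (h j)))"
  by (simp add: det_on_reindex[OF h] det_on_mat)

lemma det_on_mult:
  fixes M N :: "'i \<Rightarrow> 'i \<Rightarrow> 'a::comm_ring_1"
  assumes fin: "finite I"
  shows "det_on I (\<lambda>a b. \<Sum>c\<in>I. M a c * N c b) = det_on I M * det_on I N"
proof -
  obtain h where h: "bij_betw h {0..<card I} I"
    using ex_bij_betw_nat_finite[OF fin] by blast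
  note dj = det_on_jnf_eq[OF h]
  let ?n = "card I"
  let ?MM = "mat ?n ?n (\<lambda>(i,j). M (h i) (h j))"
  let ?NN = "mat ?n ?n (\<lambda>(i,j). N (h i) (h j))"
  have eq: "mat ?n ?n (\<lambda>(i,j). \<Sum>c\<in>I. M (h i) c * N c (h j)) = ?MM * ?NN"
  proof (rule eq_matI)
    fix i j assume i: "i < dim_row (?MM * ?NN)" and j: "j < dim_col (?MM * ?NN)"
    have "(?MM * ?NN) $$ (i,j) = (\<Sum>l\<in>{0..<?n}. M (h i) (h l) * N (h l) (h j))"
      using i j by (simp add: scalar_prod_def)
    also have "\<dots> = (\<Sum>c\<in>I. M (h i) c * N c (h j))"
      by (rule sum.reindex_bij_betw[OF h])
    finally show "mat ?n ?n (\<lambda>(i,j). \<Sum>c\<in>I. M (h i) c * N c (h j)) $$ (i,j) = (?MM * ?NN) $$ (i,j)"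
      using i j by simp
  qed auto
  show ?thesis
    unfolding dj eq by (rule det_mult) auto
qed

lemma det_on_identical_rows:
  fixes M :: "'i \<Rightarrow> 'i \<Rightarrow> 'a::comm_ring_1"
  assumes fin: "finite I" and a: "a \<in> I" and b: "b \<in> I" and ab: "a \<noteq> b"
    and r: "\<And>j. j \<in> I \<Longrightarrow> M a j = M b j"
  shows "det_on I M = 0"
proof -
  obtain h where h: "bij_betw h {0..<card I} I"
    using ex_bij_betw_nat_finite[OF fin] by blast
  note dj = det_on_jnf_eq[OF h]
  obtain i0 where i0: "i0 < card I" "h i0 = a" using h a unfolding bij_betw_def by (metis atLeastLessThan_iff imageE)
  obtain j0 where j0: "j0 < card I" "h j0 = b" using h b unfolding bij_betw_def by (metis atLeastLessThan_iff imageE)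
  have hI: "\<And>l. l < card I \<Longrightarrow> h l \<in> I" using h by (auto simp: bij_betw_def)
  show ?thesis unfolding dj
  proof (rule det_identical_rows[of _ "card I" i0 j0])
    show "i0 \<noteq> j0" using i0 j0 ab by auto
    show "Matrix.row (mat (card I) (card I) (\<lambda>(i, j). M (h i) (h j))) i0 =
          Matrix.row (mat (card I) (card I) (\<lambda>(i, j). M (h i) (h j))) j0"
      using i0 j0 r hI by (intro eq_vecI) auto
  qed (use i0 j0 in auto)
qed

lemma det_on_id:
  assumes fin: "finite I"
  shows "det_on I (\<lambda>a b. if a = b then (1::'a::comm_ring_1) else 0) = 1"
proof -
  obtain h where h: "bij_betw h {0..<card I} I"
    using ex_bij_betw_nat_finite[OF fin] by blast
  note dj = det_on_jnf_eq[OF h]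
  have "mat (card I) (card I) (\<lambda>(i,j). if h i = h j then (1::'a) else 0) = 1\<^sub>m (card I)"
    using h by (intro eq_matI) (auto simp: bij_betw_def inj_on_def)
  then show ?thesis unfolding dj by simp
qed

lemma det_on_sylvester:
  fixes D :: "'i \<Rightarrow> 'k \<Rightarrow> 'a::idom" and E :: "'k \<Rightarrow> 'i \<Rightarrow> 'a"
  assumes fI: "finite I" and fK: "finite K"
  shows "det_on I (\<lambda>a b. (if a = b then 1 else 0) - (\<Sum>c\<in>K. D a c * E c b))
       = det_on K (\<lambda>a b. (if a = b then 1 else 0) - (\<Sum>c\<in>I. E a c * D c b))"
proof -
  obtain h where h: "bij_betw h {0..<card I} I"
    using ex_bij_betw_nat_finite[OF fI] by blast
  note dh = det_on_jnf_eq[OF h]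
  obtain g where g: "bij_betw g {0..<card K} K"
    using ex_bij_betw_nat_finite[OF fK] by blast
  note dg = det_on_jnf_eq[OF g]
  let ?m = "card I" and ?k = "card K"
  let ?D = "mat ?m ?k (\<lambda>(i,j). D (h i) (g j))"
  let ?E = "mat ?k ?m (\<lambda>(i,j). E (g i) (h j))"
  have e1: "mat ?m ?m (\<lambda>(i,j). (if h i = h j then 1 else 0) - (\<Sum>c\<in>K. D (h i) c * E c (h j)))
        = 1\<^sub>m ?m - ?D * ?E"
  proof (rule eq_matI)
    fix i j assume i: "i < dim_row (1\<^sub>m ?m - ?D * ?E)" and j: "j < dim_col (1\<^sub>m ?m - ?D * ?E)"
    have "(?D * ?E) $$ (i,j) = (\<Sum>l\<in>{0..<?k}. D (h i) (g l) * E (g l) (h j))"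
      using i j by (simp add: scalar_prod_def)
    also have "\<dots> = (\<Sum>c\<in>K. D (h i) c * E c (h j))"
      by (rule sum.reindex_bij_betw[OF g])
    finally show "mat ?m ?m (\<lambda>(i,j). (if h i = h j then 1 else 0) - (\<Sum>c\<in>K. D (h i) c * E c (h j))) $$ (i,j)
        = (1\<^sub>m ?m - ?D * ?E) $$ (i,j)"
      using i j h by (auto simp: bij_betw_def inj_on_def)
  qed auto
  have e2: "mat ?k ?k (\<lambda>(i,j). (if g i = g j then 1 else 0) - (\<Sum>c\<in>I. E (g i) c * D c (g j)))
        = 1\<^sub>m ?k - ?E * ?D"
  proof (rule eq_matI)
    fix i j assume i: "i < dim_row (1\<^sub>m ?k - ?E * ?D)" and j: "j < dim_col (1\<^sub>m ?k - ?E * ?D)"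
    have "(?E * ?D) $$ (i,j) = (\<Sum>l\<in>{0..<?m}. E (g i) (h l) * D (h l) (g j))"
      using i j by (simp add: scalar_prod_def)
    also have "\<dots> = (\<Sum>c\<in>I. E (g i) c * D c (g j))"
      by (rule sum.reindex_bij_betw[OF h])
    finally show "mat ?k ?k (\<lambda>(i,j). (if g i = g j then 1 else 0) - (\<Sum>c\<in>I. E (g i) c * D c (g j))) $$ (i,j)
        = (1\<^sub>m ?k - ?E * ?D) $$ (i,j)"
      using i j g by (auto simp: bij_betw_def inj_on_def)
  qed auto
  show ?thesis unfolding dh dg
    by (simp only: e1 e2, rule jnf_sylvester) auto
qed

lemma det_on_row_sum:
  fixes M :: "'i \<Rightarrow> 'i \<Rightarrow> 'a::comm_ring_1"
  assumes fin: "finite I" and k: "k \<in> I"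
  shows "det_on I (\<lambda>a b. if a = k then (\<Sum>c\<in>S. f c * R c b) else M a b)
       = (\<Sum>c\<in>S. f c * det_on I (\<lambda>a b. if a = k then R c b else M a b))"
proof -
  have "\<And>p. (\<Prod>i\<in>I. (if i = k then (\<Sum>c\<in>S. f c * R c (p i)) else M i (p i)))
      = (\<Sum>c\<in>S. f c * (\<Prod>i\<in>I. (if i = k then R c (p i) else M i (p i))))"
  proof -
    fix p
    have "(\<Prod>i\<in>I. (if i = k then (\<Sum>c\<in>S. f c * R c (p i)) else M i (p i)))
        = (\<Sum>c\<in>S. f c * R c (p k)) * (\<Prod>i\<in>I - {k}. M i (p i))"
      using fin k by (simp add: prod.remove)
    also have "\<dots> = (\<Sum>c\<in>S. f c * (R c (p k) * (\<Prod>i\<in>I - {k}. M i (p i))))"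
      by (simp add: sum_distrib_right mult.assoc)
    also have "\<dots> = (\<Sum>c\<in>S. f c * (\<Prod>i\<in>I. (if i = k then R c (p i) else M i (p i))))"
      using fin k by (simp add: prod.remove)
    finally show "?thesis p" .
  qed
  then show ?thesis
    unfolding det_on_def
    by (simp add: sum_distrib_left sum.swap[of _ S] mult.left_commute)
qed

lemma adj_on_identity:
  fixes M :: "'i \<Rightarrow> 'i \<Rightarrow> 'a::comm_ring_1"
  assumes fin: "finite I" and a: "a \<in> I" and b: "b \<in> I"
  shows "(\<Sum>c\<in>I. M a c * adj_on I M c b) = (if a = b then det_on I M else 0)"
proof -
  have "(\<Sum>c\<in>I. M a c * adj_on I M c b)
      = det_on I (\<lambda>x y. if x = b then (\<Sum>c\<in>I. M a c * (if y = c then 1 else 0)) else M x y)"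
    unfolding adj_on_def by (rule det_on_row_sum[OF fin b, symmetric])
  also have "\<dots> = det_on I (\<lambda>x y. if x = b then (if y \<in> I then M a y else 0) else M x y)"
    using fin by (simp add: if_distrib[of "(*) _"] cong: if_cong)
  finally have eq: "(\<Sum>c\<in>I. M a c * adj_on I M c b) = det_on I (\<lambda>x y. if x = b then (if y \<in> I then M a y else 0) else M x y)" .
  show ?thesis
  proof (cases "a = b")
    case True
    have "det_on I (\<lambda>x y. if x = b then (if y \<in> I then M a y else 0) else M x y) = det_on I M"
      unfolding det_on_def
    proof (rule sum.cong[OF refl], rule arg_cong[where f = "(*) _"], rule prod.cong[OF refl])
      fix p i assume p: "p \<in> {p. p permutes I}" and i: "i \<in> I"
      have "p i \<in> I" using p i by (simp add: permutes_in_image)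
      then show "(if i = b then (if p i \<in> I then M a (p i) else 0) else M i (p i)) = M i (p i)"
        using True by (cases "i = b") auto
    qed
    then show ?thesis using eq True by simp
  next
    case False
    have "det_on I (\<lambda>x y. if x = b then (if y \<in> I then M a y else 0) else M x y) = 0"
      by (rule det_on_identical_rows[OF fin a b False]) (use False in auto)
    then show ?thesis using eq False by simp
  qed
qed

lemma det_on_almost_diag:
  fixes N :: "'i \<Rightarrow> 'i \<Rightarrow> 'a::comm_ring_1"
  assumes fin: "finite I" and k: "k \<in> I"
    and diag: "\<And>a b. a \<in> I \<Longrightarrow> b \<in> I \<Longrightarrow> a \<noteq> k \<Longrightarrow> N a b = (if a = b then d else 0)"
  shows "det_on I N = d ^ (card I - 1) * N k k"
proof -
  have zero: "(\<Prod>i\<in>I. N i (p i)) = 0" if p: "p permutes I" "p \<noteq> id" for p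
  proof -
    obtain i where i: "p i \<noteq> i" using p(2) by (auto simp: fun_eq_iff)
    have iI: "i \<in> I" using i p(1) by (meson permutes_not_in)
    obtain j where j: "j \<in> I" "j \<noteq> k" "p j \<noteq> j"
    proof (cases "i = k")
      case True
      have pkI: "p k \<in> I" using k p(1) by (simp add: permutes_in_image)
      have "p (p k) \<noteq> p k"
      proof
        assume "p (p k) = p k"
        then have "p k = k" using p(1) by (metis permutes_inj inj_eq)
        then show False using i True by simp
      qed
      then show ?thesis using that[of "p k"] pkI i True by auto
    next
      case False
      then show ?thesis using that[of i] iI i by auto
    qed
    have "N j (p j) = 0" using diag[OF j(1) _ j(2)] j p(1) by (simp add: permutes_in_image)
    then show ?thesis using fin j(1) by (meson prod_zero)
  qed
  have "det_on I N = (\<Sum>p\<in>{p. p permutes I}. if p = id then of_int (sign p) * (\<Prod>i\<in>I. N i (p i)) else 0)"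
    unfolding det_on_def by (rule sum.cong[OF refl]) (auto simp: zero)
  also have "\<dots> = (\<Prod>i\<in>I. N i i)"
    using fin by (subst sum.delta) (auto simp: permutes_id finite_permutations)
  also have "\<dots> = N k k * (\<Prod>i\<in>I - {k}. N i i)"
    using fin k by (simp add: prod.remove)
  also have "(\<Prod>i\<in>I - {k}. N i i) = (\<Prod>i\<in>I - {k}. d)"
    by (rule prod.cong[OF refl]) (use diag in auto)
  also have "\<dots> = d ^ (card I - 1)" using fin k by (simp add: card_Diff_singleton)
  finally show ?thesis by (simp add: mult.commute)
qed




lemma allowed_wordsD:
  assumes "w \<in> allowed_words N A n"
  shows "length w = n" "set w \<subseteq> alphabet N" "\<And>k. Suc k < n \<Longrightarrow> A (w!k) (w!Suc k) = 1"
proof -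
  obtain x k where x: "x \<in> shift_space N A" and w: "w = map x [k..<k+n]"
    using assms by (auto simp: allowed_words_def)
  show "length w = n" using w by simp
  show "set w \<subseteq> alphabet N" using w x by (auto simp: shift_space_def)
  fix j assume "Suc j < n"
  then show "A (w!j) (w!Suc j) = 1" using w x by (simp add: shift_space_def)
qed

lemma allowed_wordsI:
  assumes "x \<in> shift_space N A" "w = map x [k..<k+n]"
  shows "w \<in> allowed_words N A n"
  using assms unfolding allowed_words_def by blast

lemma map_upt_nth: "i < n \<Longrightarrow> map x [k..<k+n] ! i = x (k + i)"
  by simp

lemma finite_allowed_words: "finite (allowed_words N A n)"
proof (rule finite_subset)
  show "allowed_words N A n \<subseteq> {w. set w \<subseteq> alphabet N \<and> length w = n}"
    using allowed_wordsD by blast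
  show "finite {w. set w \<subseteq> alphabet N \<and> length w = n}"
    by (rule finite_lists_length_eq) (simp add: alphabet_def)
qed

lemma allowed_words_tl:
  assumes "w \<in> allowed_words N A n"
  shows "tl w \<in> allowed_words N A (n - 1)"
proof -
  obtain x k where x: "x \<in> shift_space N A" and w: "w = map x [k..<k+n]"
    using assms by (auto simp: allowed_words_def)
  show ?thesis
  proof (cases n)
    case 0 then show ?thesis using w x unfolding allowed_words_def by (auto intro!: exI[of _ k])
  next
    case (Suc m)
    have "tl w = map x [Suc k..<Suc k + m]"
      by (rule nth_equalityI) (use w Suc in \<open>auto simp: nth_tl simp del: upt_Suc\<close>)
    then show ?thesis using x Suc by (simp only: allowed_wordsI diff_Suc_1)
  qed
qed

lemma allowed_words_butlast:
  assumes "w \<in> allowed_words N A n"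
  shows "butlast w \<in> allowed_words N A (n - 1)"
proof -
  obtain x k where x: "x \<in> shift_space N A" and w: "w = map x [k..<k+n]"
    using assms by (auto simp: allowed_words_def)
  show ?thesis
  proof (cases n)
    case 0 then show ?thesis using w x unfolding allowed_words_def by (auto intro!: exI[of _ k])
  next
    case (Suc m)
    have "butlast w = map x [k..<k + m]"
      by (rule nth_equalityI) (use w Suc in \<open>auto simp: nth_butlast simp del: upt_Suc\<close>)
    then show ?thesis using x Suc by (auto intro: allowed_wordsI)
  qed
qed

lemma allowed_words_prepend:
  assumes Y: "Y \<in> allowed_words N A n" and n: "n \<ge> 1" and a: "a \<in> alphabet N"
    and aY: "A a (hd Y) = 1"
  shows "a # Y \<in> allowed_words N A (Suc n)"
proof -
  obtain y k where y: "y \<in> shift_space N A" and w: "Y = map y [k..<k+n]"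
    using Y by (auto simp: allowed_words_def)
  define x where "x m = (if m = 0 then a else y (k + m - 1))" for m
  have hdY: "hd Y = y k" using w n by (simp add: hd_map upt_rec)
  have "x \<in> shift_space N A"
    unfolding shift_space_def
  proof (intro CollectI conjI allI)
    fix m
    show "x m \<in> alphabet N" using y a by (simp add: x_def shift_space_def)
    show "A (x m) (x (Suc m)) = 1"
    proof (cases m)
      case 0 then show ?thesis using aY hdY by (simp add: x_def)
    next
      case (Suc m')
      then show ?thesis using y by (simp add: x_def shift_space_def add.commute add.left_commute)
    qed
  qed
  moreover have "a # Y = map x [0..<0 + Suc n]"
  proof (rule nth_equalityI)
    show "length (a # Y) = length (map x [0..<0 + Suc n])" using w by simp
    fix i assume i: "i < length (a # Y)"
    then have e: "map x [0..<0 + Suc n] ! i = x i" using w by (simp del: upt_Suc)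
    show "(a # Y) ! i = map x [0..<0 + Suc n] ! i"
      unfolding e using w i by (cases i) (auto simp: x_def add.commute)
  qed
  ultimately show ?thesis by (rule allowed_wordsI)
qed

lemma irreducible_succ:
  assumes irr: "irreducible_01 N A" and i: "i \<in> alphabet N"
  shows "\<exists>j\<in>alphabet N. A i j = 1"
proof -
  obtain w where w: "length w \<ge> 2" "hd w = i" "set w \<subseteq> alphabet N"
    "\<And>k. Suc k < length w \<Longrightarrow> A (w ! k) (w ! Suc k) = 1"
    using irr i unfolding irreducible_01_def by blast
  have "A (w!0) (w!1) = 1" using w(1) w(4)[of 0] by simp
  moreover have "w!0 = i" using w(1,2) by (cases w) auto
  moreover have "w!1 \<in> alphabet N" using w(1,3) by (meson less_le_trans nth_mem one_less_numeral_iff semiring_norm(76) subsetD)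
  ultimately show ?thesis by metis
qed

lemma irreducible_path:
  assumes irr: "irreducible_01 N A" and c: "c \<in> alphabet N"
  shows "\<exists>x\<in>shift_space N A. x 0 = c"
proof -
  define s where "s i = (SOME j. j \<in> alphabet N \<and> A i j = 1)" for i
  have s: "s i \<in> alphabet N \<and> A i (s i) = 1" if "i \<in> alphabet N" for i
    using irreducible_succ[OF irr that] unfolding s_def by (metis (mono_tags, lifting) someI_ex)
  define x where "x = rec_nat c (\<lambda>_ i. s i)"
  have x0: "x 0 = c" and xS: "\<And>m. x (Suc m) = s (x m)" by (simp_all add: x_def)
  have xin: "x m \<in> alphabet N" for m
    by (induction m) (use c s in \<open>auto simp: x0 xS\<close>)
  have "x \<in> shift_space N A" unfolding shift_space_def using xin s by (auto simp: xS)
  then show ?thesis using x0 by blast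
qed

lemma allowed_words_single:
  assumes irr: "irreducible_01 N A" and c: "c \<in> alphabet N"
  shows "[c] \<in> allowed_words N A 1"
proof -
  obtain x where x: "x \<in> shift_space N A" "x 0 = c" using irreducible_path[OF irr c] by blast
  have "[c] = map x [0..<0+1]" using x by simp
  then show ?thesis using x(1) by (rule allowed_wordsI[rotated])
qed

lemma allowed_words_append:
  assumes irr: "irreducible_01 N A" and W: "W \<in> allowed_words N A n" and n: "n \<ge> 1"
    and c: "c \<in> alphabet N" and Wc: "A (last W) c = 1"
  shows "W @ [c] \<in> allowed_words N A (Suc n)"
proof -
  obtain x k where x: "x \<in> shift_space N A" and w: "W = map x [k..<k+n]"
    using W by (auto simp: allowed_words_def)
  obtain y where y: "y \<in> shift_space N A" "y 0 = c" using irreducible_path[OF irr c] by blast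
  define x' where "x' m = (if m < n then x (k + m) else y (m - n))" for m
  have lastW: "last W = x (k + n - 1)" using w n by (simp add: last_map)
  have "x' \<in> shift_space N A"
    unfolding shift_space_def
  proof (intro CollectI conjI allI)
    fix m
    show "x' m \<in> alphabet N" using x y by (simp add: x'_def shift_space_def)
    show "A (x' m) (x' (Suc m)) = 1"
    proof (cases "Suc m < n")
      case True then show ?thesis using x by (simp add: x'_def shift_space_def)
    next
      case False
      show ?thesis
      proof (cases "Suc m = n")
        case True
        then have "x' m = last W" "x' (Suc m) = c" using lastW y by (auto simp: x'_def)
        then show ?thesis using Wc by simp
      next
        case False2: False
        have "Suc m - n = Suc (m - n)" using False False2 by arith
        then have "x' m = y (m - n)" "x' (Suc m) = y (Suc (m - n))" using False by (auto simp: x'_def)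
        then show ?thesis using y by (simp add: shift_space_def)
      qed
    qed
  qed
  moreover have "W @ [c] = map x' [0..<0 + Suc n]"
  proof (rule nth_equalityI)
    show "length (W @ [c]) = length (map x' [0..<0 + Suc n])" using w by simp
    fix i assume i: "i < length (W @ [c])"
    then have e: "map x' [0..<0 + Suc n] ! i = x' i" using w by (simp del: upt_Suc)
    show "(W @ [c]) ! i = map x' [0..<0 + Suc n] ! i"
      unfolding e using w y i by (auto simp: x'_def nth_append)
  qed
  ultimately show ?thesis by (rule allowed_wordsI)
qed




lemma det_on_cong:
  assumes "\<And>a b. a \<in> I \<Longrightarrow> b \<in> I \<Longrightarrow> M a b = M' a b"
  shows "det_on I M = det_on I M'"
  unfolding det_on_def
proof (rule sum.cong[OF refl], rule arg_cong[where f = "(*) _"], rule prod.cong[OF refl])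
  fix q i assume "q \<in> {p. p permutes I}" "i \<in> I"
  then show "M i (q i) = M' i (q i)" using assms by (simp add: permutes_in_image)
qed

locale core =
  fixes N :: nat and A :: "nat \<Rightarrow> nat \<Rightarrow> nat" and p :: "nat \<Rightarrow> nat \<Rightarrow> 'a::idom" and z :: 'a
  assumes irr: "irreducible_01 N A"
    and pz: "\<And>i j. i \<in> alphabet N \<Longrightarrow> j \<in> alphabet N \<Longrightarrow> A i j \<noteq> 1 \<Longrightarrow> p i j = 0"
begin

abbreviation S where "S \<equiv> alphabet N"
abbreviation L where "L n \<equiv> allowed_words N A n"

definition Pg :: "nat \<Rightarrow> nat list \<Rightarrow> nat list \<Rightarrow> 'a" where
  "Pg n X Y = (if star_defined X Y \<and> star X Y \<in> L (Suc n) then p (last X) (last Y) else 0)"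

definition d where "d = det_on S (id_minus z p)"
definition A1 where "A1 = adj_on S (id_minus z p)"

lemma finS: "finite S" by (simp add: alphabet_def)
lemma finL: "finite (L n)" by (rule finite_allowed_words)

lemma L1_bij: "bij_betw (\<lambda>i. [i]) S (L 1)"
proof (rule bij_betwI')
  show "\<And>x y. x \<in> S \<Longrightarrow> y \<in> S \<Longrightarrow> ([x] = [y]) = (x = y)" by simp
  show "\<And>x. x \<in> S \<Longrightarrow> [x] \<in> L 1" using allowed_words_single[OF irr] by blast
  fix w assume w: "w \<in> L 1"
  then have "length w = 1" "set w \<subseteq> S" using allowed_wordsD by blast+
  then show "\<exists>x\<in>S. w = [x]" by (cases w) auto
qed

lemma Pg1: assumes "i \<in> S" "j \<in> S" shows "Pg 1 [i] [j] = p i j"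
proof (cases "[i, j] \<in> L 2")
  case True then show ?thesis by (simp add: Pg_def star_defined_def star_def numeral_2_eq_2)
next
  case False
  have "A i j \<noteq> 1"
  proof
    assume "A i j = 1"
    then have "[i] @ [j] \<in> L (Suc 1)"
      using allowed_words_append[OF irr allowed_words_single[OF irr assms(1)] _ assms(2)] by simp
    then show False using False by (simp add: numeral_2_eq_2)
  qed
  then show ?thesis using False pz assms by (simp add: Pg_def star_defined_def star_def numeral_2_eq_2)
qed

lemma chain: assumes "n \<ge> 1" shows "det_on (L n) (id_minus z (Pg n)) = d"
  using assms
proof (induction n rule: nat_induct_at_least)
  case base
  have "det_on (L 1) (id_minus z (Pg 1)) = det_on S (\<lambda>i j. id_minus z (Pg 1) [i] [j])"
    by (rule det_on_reindex[OF L1_bij finS])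
  also have "\<dots> = d" unfolding d_def
  proof (rule det_on_cong)
    fix a b assume "a \<in> S" "b \<in> S"
    then have "Pg 1 [a] [b] = p a b" by (rule Pg1)
    then show "id_minus z (Pg 1) [a] [b] = id_minus z p a b" by (simp add: id_minus_def)
  qed
  finally show ?case .
next
  case (Suc n)
  define D where "D X W = z * (if W = tl X then 1 else 0)" for X W :: "nat list"
  define E where "E W Y = (if W = butlast Y then p (last W) (last Y) else 0)" for W Y :: "nat list"
  have c1: "id_minus z (Pg (Suc n)) X Y = (if X = Y then 1 else 0) - (\<Sum>W\<in>L n. D X W * E W Y)"
    if X: "X \<in> L (Suc n)" and Y: "Y \<in> L (Suc n)" for X Y
  proof -
    have tlX: "tl X \<in> L n" using allowed_words_tl[OF X] by simp
    have lX: "length X = Suc n" and lY: "length Y = Suc n" using X Y allowed_wordsD by blast+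
    have "(\<Sum>W\<in>L n. D X W * E W Y) = (\<Sum>W\<in>L n. if W = tl X then z * E W Y else 0)"
      by (rule sum.cong) (auto simp: D_def)
    also have "\<dots> = z * E (tl X) Y" using tlX finL by (simp add: sum.delta')
    also have "\<dots> = z * Pg (Suc n) X Y"
    proof (cases "tl X = butlast Y")
      case False then show ?thesis by (simp add: E_def Pg_def star_defined_def)
    next
      case True
      have X2: "length X \<ge> 2" using lX Suc by simp
      have lt: "last (tl X) = last X" using X2 by (intro last_tl) (cases X; auto)
      have Yne: "Y \<noteq> []" using lY by auto
      have eq: "star X Y = hd X # Y"
        by (cases X) (use True Yne lX in \<open>auto simp: star_def\<close>)
      have hdX: "hd X \<in> S" using allowed_wordsD(2)[OF X] lX by (cases X) auto
      have "hd Y = X ! 1"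
      proof -
        have "hd Y = butlast Y ! 0" using lY Suc by (cases Y rule: rev_cases) (auto simp: hd_conv_nth nth_append)
        also have "\<dots> = tl X ! 0" using True by simp
        also have "\<dots> = X ! 1" using X2 by (cases X) auto
        finally show ?thesis .
      qed
      moreover have "A (X ! 0) (X ! 1) = 1" using allowed_wordsD(3)[OF X, of 0] Suc by simp
      moreover have "X ! 0 = hd X" using X2 by (cases X) auto
      ultimately have "A (hd X) (hd Y) = 1" by simp
      then have "star X Y \<in> L (Suc (Suc n))"
        unfolding eq using allowed_words_prepend[OF Y _ hdX] by simp
      moreover have "last (butlast Y) = last X" using lt True by simp
      moreover have "X \<noteq> []" using lX by auto
      ultimately show ?thesis using True lX lY
        by (simp add: E_def Pg_def star_defined_def)
    qed
    finally show ?thesis by (simp add: id_minus_def)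
  qed
  have c2: "(if W = W' then 1 else 0) - (\<Sum>Y\<in>L (Suc n). E W Y * D Y W') = id_minus z (Pg n) W W'"
    if W: "W \<in> L n" and W': "W' \<in> L n" for W W'
  proof -
    have lW: "length W = n" and lW': "length W' = n" using W W' allowed_wordsD by blast+
    have key: "E W Y * D Y W' = (if Y = W @ [last W'] then (if tl W = butlast W' then z * p (last W) (last W') else 0) else 0)"
      if Y: "Y \<in> L (Suc n)" for Y
    proof -
      have lY: "length Y = Suc n" using Y allowed_wordsD by blast
      have iff: "(W = butlast Y \<and> W' = tl Y) \<longleftrightarrow> (Y = W @ [last W'] \<and> tl W = butlast W')"
      proof
        assume a: "W = butlast Y \<and> W' = tl Y"
        have Yne: "Y \<noteq> []" using lY by auto
        have "tl Y \<noteq> []" using lY Suc by (cases Y) auto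
        then have "last Y = last W'" using a last_tl[of Y] by simp
        then have "Y = W @ [last W']" using a Yne by (metis append_butlast_last_id)
        moreover have "tl W = butlast W'" using a by (simp add: butlast_tl)
        ultimately show "Y = W @ [last W'] \<and> tl W = butlast W'" by simp
      next
        assume a: "Y = W @ [last W'] \<and> tl W = butlast W'"
        have Wne: "W \<noteq> []" "W' \<noteq> []" using lW lW' Suc by auto
        have "tl Y = tl W @ [last W']" using a Wne by simp
        also have "\<dots> = W'" using a Wne by simp
        finally show "W = butlast Y \<and> W' = tl Y" using a by simp
      qed
      show ?thesis
      proof (cases "W = butlast Y \<and> W' = tl Y")
        case True
        then have Yeq: "Y = W @ [last W']" and tb: "tl W = butlast W'" using iff by auto
        have lY': "last Y = last W'" using Yeq by (metis last_snoc)
        have e1: "E W Y = p (last W) (last W')" using True lY' by (simp add: E_def)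
        have e2: "D Y W' = z" using True by (simp add: D_def)
        show ?thesis unfolding e1 e2 using Yeq tb by (simp add: mult.commute)
      next
        case False
        have "E W Y * D Y W' = 0" using False by (auto simp: E_def D_def)
        moreover have "\<not> (Y = W @ [last W'] \<and> tl W = butlast W')" using iff False by blast
        ultimately show ?thesis by auto
      qed
    qed
    have "(\<Sum>Y\<in>L (Suc n). E W Y * D Y W')
        = (\<Sum>Y\<in>L (Suc n). if Y = W @ [last W'] then (if tl W = butlast W' then z * p (last W) (last W') else 0) else 0)"
      by (rule sum.cong[OF refl]) (rule key)
    also have "\<dots> = (if W @ [last W'] \<in> L (Suc n) \<and> tl W = butlast W' then z * p (last W) (last W') else 0)"
      using finL by (simp add: sum.delta')
    also have "\<dots> = z * Pg n W W'"
      using lW lW' Suc by (auto simp: Pg_def star_defined_def star_def)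
    finally show ?thesis by (simp add: id_minus_def)
  qed
  have "det_on (L (Suc n)) (id_minus z (Pg (Suc n)))
      = det_on (L (Suc n)) (\<lambda>X Y. (if X = Y then 1 else 0) - (\<Sum>W\<in>L n. D X W * E W Y))"
    by (rule det_on_cong) (rule c1)
  also have "\<dots> = det_on (L n) (\<lambda>W W'. (if W = W' then 1 else 0) - (\<Sum>Y\<in>L (Suc n). E W Y * D Y W'))"
    by (rule det_on_sylvester[OF finL finL])
  also have "\<dots> = det_on (L n) (id_minus z (Pg n))"
    by (rule det_on_cong) (rule c2)
  also have "\<dots> = d" by (rule Suc.IH)
  finally show ?case .
qed

end



context core begin

definition wk :: "nat list \<Rightarrow> nat \<Rightarrow> 'a" where
  "wk X k = (\<Prod>j\<in>{length X - k..length X - 1}. p (X!(j-1)) (X!j))"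

definition Sg :: "nat \<Rightarrow> nat list \<Rightarrow> nat list \<Rightarrow> 'a" where
  "Sg n Y X = (\<Sum>k<n. (if drop k Y = take (n-k) X then wk X k else 0) * z^k)"

definition G :: "nat \<Rightarrow> nat list \<Rightarrow> nat list \<Rightarrow> 'a" where
  "G n Y X = d * Sg n Y X + z^(n-1) * wk X (n-1) * (A1 (last Y) (hd X) - (if last Y = hd X then d else 0))"

lemma wk_0: "length X \<ge> 1 \<Longrightarrow> wk X 0 = 1"
  by (simp add: wk_def)

lemma wk_Suc:
  assumes "Suc k < length X"
  shows "wk X (Suc k) = p (X!(length X - Suc k - 1)) (X!(length X - Suc k)) * wk X k"
proof -
  let ?l = "length X"
  have "{?l - Suc k..?l - 1} = insert (?l - Suc k) {Suc (?l - Suc k)..?l - 1}"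
    using assms by (intro Icc_eq_insert_lb_nat) simp
  moreover have "Suc (?l - Suc k) = ?l - k" using assms by simp
  ultimately have eqs: "{?l - Suc k..?l - 1} = insert (?l - Suc k) {?l - k..?l - 1}" by simp
  show ?thesis unfolding wk_def eqs by (subst prod.insert) (use assms in auto)
qed

lemma Pg_eq:
  assumes n: "n \<ge> 1" and Z: "Z \<in> L n" and Y: "Y \<in> L n"
  shows "Pg n Z Y = (if tl Z = butlast Y \<and> Z @ [last Y] \<in> L (Suc n) then p (last Z) (last Y) else 0)"
proof -
  have "length Z = n" "length Y = n" using Z Y allowed_wordsD by blast+
  then show ?thesis using n by (auto simp: Pg_def star_defined_def star_def)
qed

lemma extend_ok:
  assumes n: "n \<ge> 1" and Z: "Z \<in> L n" and c: "c \<in> S" and A1': "A (last Z) c = 1"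
  shows "tl Z @ [c] \<in> L n" "Z @ [c] \<in> L (Suc n)"
proof -
  have lZ: "length Z = n" using Z allowed_wordsD by blast
  show "Z @ [c] \<in> L (Suc n)" by (rule allowed_words_append[OF irr Z n c A1'])
  show "tl Z @ [c] \<in> L n"
  proof (cases "n = 1")
    case True
    then have "tl Z = []" using lZ by (cases Z) auto
    then show ?thesis using allowed_words_single[OF irr c] True by simp
  next
    case False
    then have tlZ: "tl Z \<in> L (n - 1)" and n1: "n - 1 \<ge> 1" using allowed_words_tl[OF Z] n by auto
    have "last (tl Z) = last Z" using lZ False n by (intro last_tl) (cases Z; auto)
    then have "tl Z @ [c] \<in> L (Suc (n - 1))"
      using allowed_words_append[OF irr tlZ n1 c] A1' by simp
    then show ?thesis using n by simp
  qed
qed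

lemma sumP:
  assumes n: "n \<ge> 1" and Z: "Z \<in> L n"
  shows "(\<Sum>Y\<in>L n. Pg n Z Y * F Y) = (\<Sum>c\<in>S. p (last Z) c * F (tl Z @ [c]))"
proof -
  have lZ: "length Z = n" using Z allowed_wordsD by blast
  have lastZ: "last Z \<in> S" using allowed_wordsD(2)[OF Z] lZ n by (metis last_in_set le_numeral_extra(2) list.size(3) subsetD)
  define T where "T = {c\<in>S. tl Z @ [c] \<in> L n \<and> Z @ [c] \<in> L (Suc n)}"
  define f where "f c = tl Z @ [c]" for c :: nat
  have injf: "inj_on f T" by (auto simp: f_def inj_on_def)
  have TS: "T \<subseteq> S" by (auto simp: T_def)
  have "(\<Sum>c\<in>S. p (last Z) c * F (tl Z @ [c])) = (\<Sum>c\<in>T. p (last Z) c * F (tl Z @ [c]))"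
  proof (rule sum.mono_neutral_right[OF finS TS, symmetric, THEN sym])
    show "\<forall>c\<in>S - T. p (last Z) c * F (tl Z @ [c]) = 0"
    proof
      fix c assume c: "c \<in> S - T"
      have "A (last Z) c \<noteq> 1" using extend_ok[OF n Z] c by (auto simp: T_def)
      then show "p (last Z) c * F (tl Z @ [c]) = 0" using pz lastZ c by simp
    qed
  qed
  also have "\<dots> = (\<Sum>Y\<in>f ` T. p (last Z) (last Y) * F Y)"
    by (subst sum.reindex[OF injf]) (simp add: f_def)
  also have "\<dots> = (\<Sum>Y\<in>L n. Pg n Z Y * F Y)"
  proof (rule sum.mono_neutral_cong_left[OF finL])
    show "f ` T \<subseteq> L n" by (auto simp: f_def T_def)
    show "\<forall>Y\<in>L n - f ` T. Pg n Z Y * F Y = 0"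
    proof
      fix Y assume Y: "Y \<in> L n - f ` T"
      have YL: "Y \<in> L n" using Y by simp
      have lY: "length Y = n" using YL allowed_wordsD by blast
      show "Pg n Z Y * F Y = 0"
      proof (cases "tl Z = butlast Y \<and> Z @ [last Y] \<in> L (Suc n)")
        case True
        have Yne: "Y \<noteq> []" using lY n by auto
        have "Y = f (last Y)" using True Yne by (simp add: f_def)
        moreover have "last Y \<in> S" using allowed_wordsD(2)[OF YL] Yne by auto
        ultimately have "Y \<in> f ` T" using True YL unfolding T_def f_def by auto
        then show ?thesis using Y by simp
      next
        case False
        have "Pg n Z Y = 0" unfolding Pg_eq[OF n Z YL] using False by (rule if_not_P)
        then show ?thesis by simp
      qed
    qed
    fix Y assume "Y \<in> f ` T"
    then obtain c where c: "c \<in> T" "Y = tl Z @ [c]" by (auto simp: f_def)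
    have YL: "Y \<in> L n" using c by (simp add: T_def)
    show "p (last Z) (last Y) * F Y = Pg n Z Y * F Y"
      using Pg_eq[OF n Z YL] c by (simp add: T_def)
  qed
  finally show ?thesis by simp
qed

end



context core begin

lemma cond_iff:
  assumes k: "k < n" and lZ: "length Z = n" and lX: "length X = n"
  shows "(drop k (tl Z @ [c]) = take (n-k) X) \<longleftrightarrow>
         (drop (Suc k) Z = take (n - Suc k) X \<and> c = X!(n - Suc k))"
proof -
  have "drop k (tl Z @ [c]) = drop (Suc k) Z @ [c]"
    using k lZ by (simp add: drop_Suc)
  moreover have "take (n-k) X = take (n - Suc k) X @ [X!(n - Suc k)]"
  proof -
    have "n - k = Suc (n - Suc k)" using k by simp
    then show ?thesis using k lX by (simp add: take_Suc_conv_app_nth)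
  qed
  ultimately show ?thesis by simp
qed

lemma S1:
  assumes n: "n \<ge> 1" and Z: "Z \<in> L n" and X: "X \<in> L n"
  shows "z * (\<Sum>c\<in>S. p (last Z) c * Sg n (tl Z @ [c]) X)
       = Sg n Z X - (if Z = X then 1 else 0) + z^n * wk X (n-1) * p (last Z) (hd X)"
proof -
  have lZ: "length Z = n" and lX: "length X = n" using Z X allowed_wordsD by blast+
  have XS: "set X \<subseteq> S" using X allowed_wordsD by blast
  let ?a = "last Z"
  define g where "g k = (if drop (Suc k) Z = take (n - Suc k) X then p ?a (X!(n - Suc k)) * wk X k * z^k else 0)" for k
  have inner: "(\<Sum>c\<in>S. p ?a c * ((if drop k (tl Z @ [c]) = take (n-k) X then wk X k else 0) * z^k)) = g k"
    if k: "k < n" for k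
  proof -
    have "(\<Sum>c\<in>S. p ?a c * ((if drop k (tl Z @ [c]) = take (n-k) X then wk X k else 0) * z^k))
        = (\<Sum>c\<in>S. if c = X!(n - Suc k) then (if drop (Suc k) Z = take (n - Suc k) X then p ?a c * wk X k * z^k else 0) else 0)"
    proof (rule sum.cong[OF refl])
      fix c assume "c \<in> S"
      show "p ?a c * ((if drop k (tl Z @ [c]) = take (n-k) X then wk X k else 0) * z^k)
          = (if c = X!(n - Suc k) then (if drop (Suc k) Z = take (n - Suc k) X then p ?a c * wk X k * z^k else 0) else 0)"
        unfolding cond_iff[OF k lZ lX] by (auto simp: mult_ac)
    qed
    also have "\<dots> = g k"
    proof -
      have "n - Suc k < length X" using k lX by simp
      then have "X!(n - Suc k) \<in> S" using XS nth_mem by blast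
      then show ?thesis using finS by (simp add: sum.delta' g_def)
    qed
    finally show ?thesis .
  qed
  have "(\<Sum>c\<in>S. p ?a c * Sg n (tl Z @ [c]) X)
      = (\<Sum>c\<in>S. \<Sum>k<n. p ?a c * ((if drop k (tl Z @ [c]) = take (n-k) X then wk X k else 0) * z^k))"
    by (simp add: Sg_def sum_distrib_left)
  also have "\<dots> = (\<Sum>k<n. \<Sum>c\<in>S. p ?a c * ((if drop k (tl Z @ [c]) = take (n-k) X then wk X k else 0) * z^k))"
    by (rule sum.swap)
  also have "\<dots> = (\<Sum>k<n. g k)"
    by (rule sum.cong[OF refl], rule inner) simp
  finally have sum1: "(\<Sum>c\<in>S. p ?a c * Sg n (tl Z @ [c]) X) = (\<Sum>k<n. g k)" .
  obtain m where m: "n = Suc m" using n by (cases n) auto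
  define f where "f k = (if drop k Z = take (n-k) X then wk X k else 0) * z^k" for k
  have gm: "g m = p ?a (hd X) * wk X (n-1) * z^(n-1)"
  proof -
    have "drop (Suc m) Z = []" "take (n - Suc m) X = []" using m lZ by auto
    moreover have "X!0 = hd X" using lX m by (cases X) auto
    ultimately show ?thesis using m by (simp add: g_def)
  qed
  have gk: "z * g k = f (Suc k)" if k: "k < m" for k
  proof (cases "drop (Suc k) Z = take (n - Suc k) X")
    case True
    have ne: "drop (Suc k) Z \<noteq> []" using k m lZ by simp
    have "?a = last (drop (Suc k) Z)" using k m lZ by (simp add: last_drop)
    also have "\<dots> = last (take (n - Suc k) X)" using True by simp
    also have "\<dots> = X!(n - Suc k - 1)"
      using k m lX ne True by (simp add: last_conv_nth)
    finally have a: "?a = X!(n - Suc k - 1)" .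
    have "wk X (Suc k) = p (X!(n - Suc k - 1)) (X!(n - Suc k)) * wk X k"
      using wk_Suc[of k X] k m lX by simp
    then show ?thesis using True a by (simp add: g_def f_def mult_ac)
  next
    case False then show ?thesis by (simp add: g_def f_def)
  qed
  have "z * (\<Sum>c\<in>S. p ?a c * Sg n (tl Z @ [c]) X) = z * (\<Sum>k<Suc m. g k)"
    using sum1 m by simp
  also have "\<dots> = (\<Sum>k<m. z * g k) + z * g m"
    by (simp add: sum_distrib_left distrib_left)
  also have "(\<Sum>k<m. z * g k) = (\<Sum>k<m. f (Suc k))"
    by (rule sum.cong[OF refl]) (simp add: gk)
  also have "(\<Sum>k<m. f (Suc k)) = Sg n Z X - f 0"
  proof -
    have "Sg n Z X = (\<Sum>k<Suc m. f k)" using m by (simp add: Sg_def f_def)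
    also have "\<dots> = f 0 + (\<Sum>k<m. f (Suc k))" by (rule sum.lessThan_Suc_shift)
    finally show ?thesis by simp
  qed
  also have "f 0 = (if Z = X then 1 else 0)"
    using lZ lX n by (simp add: f_def wk_0)
  also have "z * g m = z^n * wk X (n-1) * p ?a (hd X)"
    using m by (simp add: gm mult_ac)
  finally show ?thesis .
qed

lemma S2:
  assumes a: "a \<in> S" and b: "b \<in> S"
  shows "(\<Sum>c\<in>S. z * p a c * A1 c b) = A1 a b - (if a = b then d else 0)"
proof -
  have "(\<Sum>c\<in>S. id_minus z p a c * A1 c b) = (if a = b then d else 0)"
    unfolding A1_def d_def by (rule adj_on_identity[OF finS a b])
  moreover have "(\<Sum>c\<in>S. id_minus z p a c * A1 c b) = A1 a b - (\<Sum>c\<in>S. z * p a c * A1 c b)"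
  proof -
    have "(\<Sum>c\<in>S. id_minus z p a c * A1 c b) = (\<Sum>c\<in>S. (if a = c then A1 c b else 0) - z * p a c * A1 c b)"
      by (rule sum.cong[OF refl]) (simp add: id_minus_def left_diff_distrib)
    also have "\<dots> = (\<Sum>c\<in>S. if a = c then A1 c b else 0) - (\<Sum>c\<in>S. z * p a c * A1 c b)"
      by (rule sum_subtractf)
    also have "(\<Sum>c\<in>S. if a = c then A1 c b else 0) = A1 a b" using a finS by simp
    finally show ?thesis .
  qed
  ultimately show ?thesis by (simp add: algebra_simps)
qed

end



context core begin

lemma MG:
  assumes n: "n \<ge> 1" and Z: "Z \<in> L n" and X: "X \<in> L n"
  shows "(\<Sum>Y\<in>L n. id_minus z (Pg n) Z Y * G n Y X) = (if Z = X then d else 0)"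
proof -
  have lZ: "length Z = n" and lX: "length X = n" using Z X allowed_wordsD by blast+
  have Zne: "Z \<noteq> []" and Xne: "X \<noteq> []" using lZ lX n by auto
  define a where "a = last Z"
  define b where "b = hd X"
  have aS: "a \<in> S" using allowed_wordsD(2)[OF Z] Zne by (auto simp: a_def)
  have bS: "b \<in> S" using allowed_wordsD(2)[OF X] Xne by (auto simp: b_def)
  obtain m where m: "n = Suc m" using n by (cases n) auto
  define w where "w = wk X (n-1)"
  define S1v where "S1v = (\<Sum>c\<in>S. p a c * Sg n (tl Z @ [c]) X)"
  define S2v where "S2v = (\<Sum>c\<in>S. p a c * A1 c b)"
  have e1: "(\<Sum>Y\<in>L n. id_minus z (Pg n) Z Y * G n Y X) = G n Z X - z * (\<Sum>Y\<in>L n. Pg n Z Y * G n Y X)"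
  proof -
    have "(\<Sum>Y\<in>L n. id_minus z (Pg n) Z Y * G n Y X)
        = (\<Sum>Y\<in>L n. (if Z = Y then G n Y X else 0) - z * (Pg n Z Y * G n Y X))"
      by (rule sum.cong[OF refl]) (simp add: id_minus_def left_diff_distrib mult.assoc)
    also have "\<dots> = (\<Sum>Y\<in>L n. if Z = Y then G n Y X else 0) - (\<Sum>Y\<in>L n. z * (Pg n Z Y * G n Y X))"
      by (rule sum_subtractf)
    also have "(\<Sum>Y\<in>L n. if Z = Y then G n Y X else 0) = G n Z X" using Z finL by simp
    finally show ?thesis by (simp add: sum_distrib_left)
  qed
  have e2: "(\<Sum>Y\<in>L n. Pg n Z Y * G n Y X) = (\<Sum>c\<in>S. p a c * G n (tl Z @ [c]) X)"
    unfolding a_def by (rule sumP[OF n Z])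
  have e3: "(\<Sum>c\<in>S. p a c * G n (tl Z @ [c]) X) = d * S1v + z^m * w * (S2v - p a b * d)"
  proof -
    have "(\<Sum>c\<in>S. p a c * G n (tl Z @ [c]) X)
        = (\<Sum>c\<in>S. d * (p a c * Sg n (tl Z @ [c]) X) + z^m * w * (p a c * A1 c b) - z^m * w * (if c = b then p a b * d else 0))"
      by (rule sum.cong[OF refl]) (simp add: G_def m w_def b_def algebra_simps)
    also have "\<dots> = d * S1v + z^m * w * S2v - z^m * w * (p a b * d)"
      using bS finS by (simp add: sum.distrib sum_subtractf sum_distrib_left[symmetric] S1v_def S2v_def)
    finally show ?thesis by (simp add: algebra_simps)
  qed
  have s1: "z * S1v = Sg n Z X - (if Z = X then 1 else 0) + z^n * w * p a b"
    unfolding S1v_def a_def b_def w_def by (rule S1[OF n Z X])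
  have s2: "z * S2v = A1 a b - (if a = b then d else 0)"
  proof -
    have "z * S2v = (\<Sum>c\<in>S. z * p a c * A1 c b)" by (simp add: S2v_def sum_distrib_left mult.assoc)
    also have "\<dots> = A1 a b - (if a = b then d else 0)" by (rule S2[OF aS bS])
    finally show ?thesis .
  qed
  have gz: "G n Z X = d * Sg n Z X + z^m * w * (A1 a b - (if a = b then d else 0))"
    by (simp add: G_def m w_def a_def b_def)
  define D1 where "D1 = (if Z = X then (1::'a) else 0)"
  define D2 where "D2 = (if a = b then d else 0)"
  have "(\<Sum>Y\<in>L n. id_minus z (Pg n) Z Y * G n Y X) = G n Z X - z * (d * S1v + z^m * w * (S2v - p a b * d))"
    using e1 e2 e3 by simp
  also have "\<dots> = G n Z X - d * (z * S1v) - z^m * w * (z * S2v) + z * z^m * w * p a b * d"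
    by (simp add: algebra_simps)
  also have "\<dots> = d * D1"
  proof -
    have zn: "z^n = z * z^m" using m by simp
    show ?thesis unfolding gz s1 s2 D1_def[symmetric] D2_def[symmetric] zn by (simp add: algebra_simps)
  qed
  finally show ?thesis by (simp add: D1_def)
qed

lemma core_det:
  assumes r: "length u \<ge> 2" and u: "u \<in> L (length u)" and dnz: "d \<noteq> 0"
    and Q: "\<And>X Y. X \<in> L (length u - 1) \<Longrightarrow> Y \<in> L (length u - 1) \<Longrightarrow>
      Q X Y = (if star_defined X Y \<and> star X Y \<in> L (length u) \<and> star X Y \<noteq> u then p (last X) (last Y) else 0)"
  shows "det_on (L (length u - 1)) (id_minus z Q)
       = d + z * p (u!(length u - 2)) (u!(length u - 1)) * G (length u - 1) (tl u) (butlast u)"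
proof -
  define n where "n = length u - 1"
  define X0 where "X0 = butlast u"
  define Y0 where "Y0 = tl u"
  define p0 where "p0 = p (u!(length u - 2)) (u!(length u - 1))"
  have n1: "n \<ge> 1" using r by (simp add: n_def)
  have lu: "length u = Suc n" using r by (simp add: n_def)
  have X0L: "X0 \<in> L n" unfolding X0_def n_def by (rule allowed_words_butlast[OF u])
  have Y0L: "Y0 \<in> L n" unfolding Y0_def n_def by (rule allowed_words_tl[OF u])
  define m where "m = card (L n)"
  have m1: "m \<ge> 1" using X0L finL unfolding m_def by (metis card_0_eq empty_iff less_one not_le)
  \<comment> \<open>Q as a rank-one perturbation of Pg\<close>
  have Qeq: "id_minus z Q Z Y = id_minus z (Pg n) Z Y + (if Z = X0 \<and> Y = Y0 then z * p0 else 0)"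
    if Z: "Z \<in> L n" and Y: "Y \<in> L n" for Z Y
  proof -
    have lZ: "length Z = n" and lY: "length Y = n" using Z Y allowed_wordsD by blast+
    have ustar: "star X0 Y0 = u"
    proof -
      have "last (tl u) = last u" using lu n1 by (intro last_tl) (cases u; auto)
      moreover have "u \<noteq> []" using lu by auto
      ultimately show ?thesis by (simp add: star_def X0_def Y0_def)
    qed
    have sd0: "star_defined X0 Y0" using lu n1 by (simp add: star_defined_def X0_def Y0_def butlast_tl) (cases u; auto)
    have iff: "(star_defined Z Y \<and> star Z Y = u) \<longleftrightarrow> (Z = X0 \<and> Y = Y0)"
    proof
      assume a: "star_defined Z Y \<and> star Z Y = u"
      then have zu: "Z @ [last Y] = u" and tb: "tl Z = butlast Y" and Zne: "Z \<noteq> []"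
        by (auto simp: star_def star_defined_def)
      have ZX: "Z = X0" using zu by (auto simp: X0_def)
      have Yne: "Y \<noteq> []" using lY n1 by auto
      have "Y = butlast Y @ [last Y]" using Yne by simp
      also have "\<dots> = tl Z @ [last Y]" using tb by simp
      also have "\<dots> = tl (Z @ [last Y])" using Zne by simp
      also have "\<dots> = Y0" using zu by (simp add: Y0_def)
      finally show "Z = X0 \<and> Y = Y0" using ZX by simp
    next
      assume "Z = X0 \<and> Y = Y0"
      then show "star_defined Z Y \<and> star Z Y = u" using sd0 ustar by simp
    qed
    have pg: "Pg n Z Y = (if star_defined Z Y \<and> star Z Y \<in> L (length u) then p (last Z) (last Y) else 0)"
      by (simp add: Pg_def lu)
    have p0eq: "Pg n X0 Y0 = p0"
    proof -
      have bl: "length (butlast u) = n" "length (tl u) = n" using lu by simp_all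
      then have ne: "butlast u \<noteq> []" "tl u \<noteq> []" using n1 by (auto simp del: length_butlast length_tl)
      have "last X0 = u!(length u - 2)" using lu n1 bl ne unfolding X0_def
        by (simp add: last_conv_nth nth_butlast)
      moreover have "last Y0 = u!(length u - 1)" using lu n1 bl ne unfolding Y0_def
        by (simp add: last_conv_nth nth_tl)
      ultimately show ?thesis using sd0 ustar u lu by (simp add: Pg_def p0_def)
    qed
    show ?thesis
    proof (cases "Z = X0 \<and> Y = Y0")
      case True
      then have "star_defined Z Y \<and> star Z Y = u" using iff by simp
      then have "Q Z Y = 0" using Q[of Z Y, folded n_def] Z Y by simp
      then show ?thesis using True p0eq by (simp add: id_minus_def algebra_simps)
    next
      case False
      then have "\<not> (star_defined Z Y \<and> star Z Y = u)" using iff by simp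
      then have "Q Z Y = Pg n Z Y" using Q[of Z Y, folded n_def] Z Y lu by (auto simp: Pg_def)
      then show ?thesis unfolding if_not_P[OF False] by (simp add: id_minus_def)
    qed
  qed
  have prodQ: "(\<Sum>Y\<in>L n. id_minus z Q Z Y * G n Y X) = (if Z = X then d else 0) + (if Z = X0 then z * p0 * G n Y0 X else 0)"
    if Z: "Z \<in> L n" and X: "X \<in> L n" for Z X
  proof -
    have "(\<Sum>Y\<in>L n. id_minus z Q Z Y * G n Y X)
        = (\<Sum>Y\<in>L n. id_minus z (Pg n) Z Y * G n Y X + (if Y = Y0 then (if Z = X0 then z * p0 * G n Y X else 0) else 0))"
      by (rule sum.cong[OF refl]) (auto simp: Qeq[OF Z] algebra_simps)
    also have "\<dots> = (\<Sum>Y\<in>L n. id_minus z (Pg n) Z Y * G n Y X) + (if Z = X0 then z * p0 * G n Y0 X else 0)"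
      using Y0L finL by (simp add: sum.distrib)
    also have "\<dots> = (if Z = X then d else 0) + (if Z = X0 then z * p0 * G n Y0 X else 0)"
      by (simp add: MG[OF n1 Z X])
    finally show ?thesis .
  qed
  have dQG: "det_on (L n) (id_minus z Q) * det_on (L n) (G n) = d^(m-1) * (d + z * p0 * G n Y0 X0)"
  proof -
    have "det_on (L n) (id_minus z Q) * det_on (L n) (G n)
        = det_on (L n) (\<lambda>Z X. \<Sum>Y\<in>L n. id_minus z Q Z Y * G n Y X)"
      by (rule det_on_mult[OF finL, symmetric])
    also have "\<dots> = det_on (L n) (\<lambda>Z X. (if Z = X then d else 0) + (if Z = X0 then z * p0 * G n Y0 X else 0))"
      by (rule det_on_cong) (simp add: prodQ)
    also have "\<dots> = d^(m-1) * (d + z * p0 * G n Y0 X0)"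
      unfolding m_def by (subst det_on_almost_diag[OF finL X0L, where d = d]) auto
    finally show ?thesis .
  qed
  have dMG: "d * det_on (L n) (G n) = d^(m-1) * d"
  proof -
    have "d * det_on (L n) (G n) = det_on (L n) (id_minus z (Pg n)) * det_on (L n) (G n)"
      by (simp add: chain[OF n1])
    also have "\<dots> = det_on (L n) (\<lambda>Z X. \<Sum>Y\<in>L n. id_minus z (Pg n) Z Y * G n Y X)"
      by (rule det_on_mult[OF finL, symmetric])
    also have "\<dots> = det_on (L n) (\<lambda>Z X. if Z = X then d else 0)"
      by (rule det_on_cong) (simp add: MG[OF n1])
    also have "\<dots> = d^(m-1) * d"
      unfolding m_def by (subst det_on_almost_diag[OF finL X0L, where d = d]) auto
    finally show ?thesis .
  qed
  have dG: "det_on (L n) (G n) = d^(m-1)" using dMG dnz by (simp add: mult.commute)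
  have "det_on (L n) (id_minus z Q) * d^(m-1) = d^(m-1) * (d + z * p0 * G n Y0 X0)"
    using dQG dG by simp
  then have "det_on (L n) (id_minus z Q) = d + z * p0 * G n Y0 X0"
    using dnz by (simp add: mult.commute)
  then show ?thesis by (simp add: n_def p0_def X0_def Y0_def)
qed

definition gdelta :: "nat \<Rightarrow> nat list \<Rightarrow> 'a" where
  "gdelta s u = (\<Prod>j\<in>{length u - s..length u - 1}. p (u!(j-1)) (u!j))"
definition gc :: "nat \<Rightarrow> nat list \<Rightarrow> 'a" where
  "gc s u = (if drop s u = take (length u - s) u then 1 else 0)"
definition gtau :: "nat list \<Rightarrow> 'a" where
  "gtau u = (\<Sum>s\<in>{0..length u - 1}. gc s u * gdelta s u * z^s)"

lemma core_formula:
  assumes r: "length u \<ge> 2"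
  shows "d + z * p (u!(length u - 2)) (u!(length u - 1)) * G (length u - 1) (tl u) (butlast u)
       = (gtau u - z^(length u - 1) * (gc (length u - 1) u * gdelta (length u - 1) u)) * d
         + z^(length u - 1) * gdelta (length u - 1) u * A1 (last u) (hd u)"
proof -
  define n where "n = length u - 1"
  define p0 where "p0 = p (u!(length u - 2)) (u!(length u - 1))"
  have n1: "n \<ge> 1" using r by (simp add: n_def)
  have lu: "length u = Suc n" using r by (simp add: n_def)
  have une: "u \<noteq> []" using lu by auto
  have p0': "p0 = p (u!(n-1)) (u!n)" using lu by (simp add: p0_def)
  have wka: "p0 * wk (butlast u) k = gdelta (Suc k) u" if k: "k < n" for k
  proof -
    have "wk (butlast u) k = (\<Prod>j\<in>{n-k..n-1}. p (u!(j-1)) (u!j))"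
    proof -
      have bl: "\<And>j. j < n \<Longrightarrow> butlast u ! j = u ! j" using lu by (simp add: nth_butlast)
      show ?thesis unfolding wk_def
      proof (rule prod.cong)
        show "{length (butlast u) - k..length (butlast u) - 1} = {n-k..n-1}" using lu by simp
        fix j assume "j \<in> {n-k..n-1}"
        then have "j < n" "j - 1 < n" using n1 by auto
        then show "p (butlast u ! (j - 1)) (butlast u ! j) = p (u ! (j - 1)) (u ! j)" using bl by simp
      qed
    qed
    moreover have "{length u - Suc k..length u - 1} = insert n {n-k..n-1}"
    proof -
      have "{n-k..Suc (n-1)} = insert (Suc (n-1)) {n-k..n-1}" by (rule atLeastAtMostSuc_conv) simp
      then show ?thesis using lu n1 by simp
    qed
    moreover have "n \<notin> {n-k..n-1}" using n1 by simp
    ultimately show ?thesis unfolding gdelta_def p0' by simp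
  qed
  have condb: "(drop k (tl u) = take (n-k) (butlast u)) \<longleftrightarrow> (drop (Suc k) u = take (length u - Suc k) u)"
    if k: "k < n" for k
  proof -
    have "drop k (tl u) = drop (Suc k) u" by (simp add: drop_Suc)
    moreover have "take (n-k) (butlast u) = take (n-k) u" using k lu by (intro take_butlast) simp
    moreover have "length u - Suc k = n - k" using lu by simp
    ultimately show ?thesis by simp
  qed
  have gcn: "gc n u = (if last u = hd u then 1 else 0)"
  proof -
    obtain v x where ux: "u = v @ [x]" using une by (cases u rule: rev_cases) auto
    have lv: "length v = n" using ux lu by simp
    have "drop n u = [x]" using ux lv by simp
    moreover have "take 1 u = [hd u]" using une by (cases u) auto
    ultimately show ?thesis using lu ux by (auto simp: gc_def)
  qed
  have lastY0: "last (tl u) = last u" using lu n1 by (intro last_tl) (cases u; auto)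
  have hdX0: "hd (butlast u) = hd u" using lu n1 by (cases u) auto
  have Gval: "G n (tl u) (butlast u) = d * Sg n (tl u) (butlast u)
      + z^(n-1) * wk (butlast u) (n-1) * (A1 (last u) (hd u) - (if last u = hd u then d else 0))"
    unfolding G_def lastY0 hdX0 ..
  have Ssum: "z * p0 * Sg n (tl u) (butlast u) = (\<Sum>k<n. gc (Suc k) u * gdelta (Suc k) u * z^(Suc k))"
  proof -
    have "z * p0 * Sg n (tl u) (butlast u)
        = (\<Sum>k<n. (if drop k (tl u) = take (n-k) (butlast u) then p0 * wk (butlast u) k else 0) * z^(Suc k))"
      unfolding Sg_def sum_distrib_left by (rule sum.cong[OF refl]) (auto simp: mult_ac)
    also have "\<dots> = (\<Sum>k<n. gc (Suc k) u * gdelta (Suc k) u * z^(Suc k))"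
      by (rule sum.cong[OF refl]) (simp add: condb wka gc_def)
    finally show ?thesis .
  qed
  have tau: "gtau u = 1 + (\<Sum>k<n. gc (Suc k) u * gdelta (Suc k) u * z^(Suc k))"
  proof -
    have "gtau u = (\<Sum>s<Suc n. gc s u * gdelta s u * z^s)"
      unfolding gtau_def using lu by (intro sum.cong) auto
    also have "\<dots> = gc 0 u * gdelta 0 u * z^0 + (\<Sum>k<n. gc (Suc k) u * gdelta (Suc k) u * z^(Suc k))"
      by (rule sum.lessThan_Suc_shift)
    also have "gc 0 u * gdelta 0 u * z^0 = 1" using lu by (simp add: gc_def gdelta_def)
    finally show ?thesis .
  qed
  have zn: "z * p0 * (z^(n-1) * wk (butlast u) (n-1)) = z^n * gdelta n u"
  proof -
    have "p0 * wk (butlast u) (n-1) = gdelta n u" using wka[of "n-1"] n1 by simp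
    moreover have "z * z^(n-1) = z^n" using n1 by (cases n) auto
    moreover have "z * p0 * (z^(n-1) * wk (butlast u) (n-1)) = (z * z^(n-1)) * (p0 * wk (butlast u) (n-1))"
      by (simp add: mult_ac)
    ultimately show ?thesis by simp
  qed
  have "d + z * p0 * G n (tl u) (butlast u)
      = d + d * (z * p0 * Sg n (tl u) (butlast u))
        + (z * p0 * (z^(n-1) * wk (butlast u) (n-1))) * (A1 (last u) (hd u) - (if last u = hd u then d else 0))"
    unfolding Gval by (simp add: algebra_simps)
  also have "\<dots> = (gtau u - z^n * (gc n u * gdelta n u)) * d + z^n * gdelta n u * A1 (last u) (hd u)"
    unfolding Ssum zn tau gcn by (cases "last u = hd u") (simp_all add: algebra_simps)
  finally show ?thesis by (simp add: n_def p0_def)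
qed

end



lemma poly_det_on: "poly (det_on I M) x = det_on I (\<lambda>a b. poly (M a b) x)"
  unfolding det_on_def by (simp add: poly_sum poly_prod)

lemma poly_adj_on: "poly (adj_on I M i j) x = adj_on I (\<lambda>a b. poly (M a b) x) i j"
  unfolding adj_on_def poly_det_on by (rule arg_cong[where f = "det_on I"]) (auto simp: fun_eq_iff)

lemma poly_id_minus: "poly (id_minus [:0,1:] (\<lambda>a b. [:c a b:]) i j) x = id_minus x c i j"
  by (simp add: id_minus_def)

theorem theorem4p12:
  fixes N :: nat and A :: "nat \<Rightarrow> nat \<Rightarrow> nat" and P :: "nat \<Rightarrow> nat \<Rightarrow> real"
    and u :: "nat list" and z :: complex
  assumes "zero_one_matrix N A"
    and "irreducible_01 N A"
    and "row_stochastic_compatible N A P"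
    and "length u \<ge> 2"
    and "u \<in> allowed_words N A (length u)"
  shows "det_on (allowed_words N A (length u - 1))
           (id_minus z (\<lambda>X Y. of_real (hadamard (B_single N A u)
                                  (higher_block_P N A P (length u - 1)) X Y)))
         = f_u N P u z"
proof -
  note irr = assms(2) and rs = assms(3) and r = assms(4) and u = assms(5)
  define pp where "pp i j = [:complex_of_real (P i j):]" for i j
  define XX :: "complex poly" where "XX = [:0, 1:]"
  have pz: "pp i j = 0" if "i \<in> alphabet N" "j \<in> alphabet N" "A i j \<noteq> 1" for i j
  proof -
    have "P i j \<ge> 0" "P i j > 0 \<longleftrightarrow> A i j = 1" using rs that(1,2) unfolding row_stochastic_compatible_def by blast+
    then have "P i j = 0" using that(3) by linarith
    then show ?thesis by (simp add: pp_def)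
  qed
  interpret C: core N A pp XX
    by unfold_locales (use irr pz in auto)
  define Q where "Q X Y = [:complex_of_real (hadamard (B_single N A u) (higher_block_P N A P (length u - 1)) X Y):]" for X Y
  have Qeq: "Q X Y = (if star_defined X Y \<and> star X Y \<in> allowed_words N A (length u) \<and> star X Y \<noteq> u
                      then pp (last X) (last Y) else 0)" for X Y
  proof -
    have "Suc (length u - 1) = length u" using r by simp
    then show ?thesis
      by (auto simp: Q_def hadamard_def B_single_def higher_block_P_def pp_def)
  qed
  have dnz: "C.d \<noteq> 0"
  proof
    assume "C.d = 0"
    then have "poly C.d 0 = 0" by simp
    moreover have "poly C.d 0 = 1"
    proof -
      have "poly C.d 0 = det_on (alphabet N) (\<lambda>a b. poly (id_minus XX pp a b) 0)"
        unfolding C.d_def by (rule poly_det_on)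
      also have "\<dots> = det_on (alphabet N) (\<lambda>a b. if a = b then 1 else 0)"
        by (rule arg_cong[where f = "det_on _"]) (auto simp: fun_eq_iff id_minus_def XX_def)
      also have "\<dots> = 1" by (rule det_on_id[OF C.finS])
      finally show ?thesis .
    qed
    ultimately show False by simp
  qed
  have main: "det_on (allowed_words N A (length u - 1)) (id_minus XX Q)
      = (C.gtau u - XX^(length u - 1) * (C.gc (length u - 1) u * C.gdelta (length u - 1) u)) * C.d
         + XX^(length u - 1) * C.gdelta (length u - 1) u * C.A1 (last u) (hd u)"
    using C.core_det[OF r u dnz, of Q] Qeq C.core_formula[OF r] by simp
  have ev: "poly (det_on (allowed_words N A (length u - 1)) (id_minus XX Q)) z
      = det_on (allowed_words N A (length u - 1))
           (id_minus z (\<lambda>X Y. of_real (hadamard (B_single N A u)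
                                  (higher_block_P N A P (length u - 1)) X Y)))"
    unfolding poly_det_on by (rule arg_cong[where f = "det_on _"]) (simp add: fun_eq_iff Q_def XX_def id_minus_def)
  have evd: "poly C.d z = det_on (alphabet N) (id_minus z (\<lambda>i j. of_real (P i j)))"
    unfolding C.d_def poly_det_on
    by (rule arg_cong[where f = "det_on _"]) (simp add: fun_eq_iff pp_def XX_def id_minus_def)
  have evA: "poly (C.A1 a b) z = adj_on (alphabet N) (id_minus z (\<lambda>i j. of_real (P i j))) a b" for a b
    unfolding C.A1_def poly_adj_on
    by (rule arg_cong[where f = "\<lambda>M. adj_on _ M a b"]) (simp add: fun_eq_iff pp_def XX_def id_minus_def)
  have evdelta: "poly (C.gdelta s u) z = of_real (delta_s_uu P s u)" for s
    by (simp add: C.gdelta_def delta_s_uu_def poly_prod pp_def)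
  have evc: "poly (C.gc s u) z = of_real (c_uu s u)" for s
    by (simp add: C.gc_def c_uu_def)
  have evtau: "poly (C.gtau u) z = tau_u P u z"
    unfolding C.gtau_def by (simp add: tau_u_def poly_sum evdelta evc XX_def)
  have deltau: "delta_s_uu P (length u - 1) u = delta_u P u"
    using r by (simp add: delta_s_uu_def delta_u_def)
  have pX: "poly XX z = z" by (simp add: XX_def)
  have "poly ((C.gtau u - XX^(length u - 1) * (C.gc (length u - 1) u * C.gdelta (length u - 1) u)) * C.d
         + XX^(length u - 1) * C.gdelta (length u - 1) u * C.A1 (last u) (hd u)) z
      = (tau_u P u z - z^(length u - 1) * (of_real (c_uu (length u - 1) u) * of_real (delta_s_uu P (length u - 1) u)))
           * det_on (alphabet N) (id_minus z (\<lambda>i j. of_real (P i j)))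
        + z^(length u - 1) * of_real (delta_s_uu P (length u - 1) u)
           * adj_on (alphabet N) (id_minus z (\<lambda>i j. of_real (P i j))) (last u) (hd u)"
    by (simp only: poly_add poly_mult poly_diff poly_power evtau evc evdelta evd evA pX)
  also have "\<dots> = f_u N P u z"
    unfolding f_u_def tau_tilde_u_def deltau by simp
  finally have "f_u N P u z = poly ((C.gtau u - XX^(length u - 1) * (C.gc (length u - 1) u * C.gdelta (length u - 1) u)) * C.d
         + XX^(length u - 1) * C.gdelta (length u - 1) u * C.A1 (last u) (hd u)) z" ..
  then show ?thesis using ev main by simp
qed


end
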